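(* Let $\mathfrak{R}=(G,G',S,\phi,\rho,\delta)$ be an optimal reconciliation. Then $\Delta(\mathfrak{R})\subseteq V(G)$.
   Context: All trees are rooted binary trees whose root node has degree 1; every other non-leaf node $x$ has exactly two children $x_l,x_r$. $G$ is a gene tree, $S$ a species tree, $\phi:L(G)\to L(S)$. A tree $G'$ is an extension of $G$ if $G$ is obtained from $G'$ by pruning some subtrees and suppressing degree-2 nodes; $V(G)\subseteq V(G')$. A map $\rho:V(G')\to V(S)$ is consistent with $S$ if $\rho(root(G'))=root(S)$ and every node $x$ of $G'$ with two children satisfies (D) $\rho(x)=\rho(x_l)=\rho(x_r)$ or (S) $\rho(x)_l=\rho(x_l)$ and $\rho(x)_r=\rho(x_r)$. A reconciliation $\mathfrak{R}=(G,G',S,\phi,\rho,\delta)$ consists of an extension $G'$ of $G$, a consistent $\rho$ with $\rho|_{L(G)}=\phi$, and an injective partial function $\delta:\Delta\to\Lambda$ with $\rho(x)=\rho(\delta(x))$, where $\Delta=\Delta(\mathfrak{R})$ (duplications) is the set of nodes with two children satisfying (D) and $\Lambda=L(G')\setminus L(G)$ (losses); $\Delta'$ is the domain and $\Lambda'$ the image of $\delta$. Cost $\omega(\mathfrak{R})=|\Lambda\setminus\Lambda'|+|\Delta\setminus\Delta'|+|\Delta'|$; $\mathfrak{R}$ is optimal if it minimizes $\omega$ among all reconciliations for the given $G,S,\phi$. *)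

theory Defs
  imports Main
begin

record 'v rtree =
  nodes :: "'v set"
  root :: 'v
  edges :: "('v \<times> 'v) set"

definition children :: "'v rtree \<Rightarrow> 'v \<Rightarrow> 'v set" where
  "children T x = {y. (x, y) \<in> edges T}"

definition leaves :: "'v rtree \<Rightarrow> 'v set" where
  "leaves T = {x \<in> nodes T. children T x = {}}"

definition is_rooted_tree :: "'v rtree \<Rightarrow> bool" where
  "is_rooted_tree T \<longleftrightarrow>
     finite (nodes T) \<and> root T \<in> nodes T \<and> edges T \<subseteq> nodes T \<times> nodes T \<and>
     (\<forall>x. (x, root T) \<notin> edges T) \<and>
     (\<forall>y \<in> nodes T. y \<noteq> root T \<longrightarrow> (\<exists>!x. (x, y) \<in> edges T)) \<and>
     (\<forall>y \<in> nodes T. (root T, y) \<in> (edges T)\<^sup>*)"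

definition planted_binary :: "'v rtree \<Rightarrow> bool" where
  "planted_binary T \<longleftrightarrow> is_rooted_tree T \<and>
     card (children T (root T)) = 1 \<and>
     (\<forall>x \<in> nodes T. x \<noteq> root T \<longrightarrow> children T x = {} \<or> card (children T x) = 2)"

text \<open>G' is an extension of G: G arises from G' by pruning some subtrees (the remaining
  node set R is closed under taking parents and contains the root) and suppressing the
  remaining degree-2 nodes (non-root nodes with exactly one remaining child).\<close>
definition extension :: "'v rtree \<Rightarrow> 'v rtree \<Rightarrow> bool" where
  "extension G' G \<longleftrightarrow> planted_binary G' \<and> planted_binary G \<and>
     (\<exists>R. root G' \<in> R \<and> R \<subseteq> nodes G' \<and>
          (\<forall>x y. (x, y) \<in> edges G' \<and> y \<in> R \<longrightarrow> x \<in> R) \<and>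
          nodes G = {x \<in> R. x = root G' \<or> card (children G' x \<inter> R) \<noteq> 1} \<and>
          root G = root G' \<and>
          edges G = {(x, y). x \<in> nodes G \<and> y \<in> nodes G \<and> x \<noteq> y \<and> (x, y) \<in> (edges G')\<^sup>* \<and>
                      (\<forall>z \<in> nodes G. (x, z) \<in> (edges G')\<^sup>* \<and> (z, y) \<in> (edges G')\<^sup>* \<longrightarrow>
                                      z = x \<or> z = y)})"

text \<open>Consistency of rho: V(G') -> V(S) with S.  Condition (S) is read with the children
  of x matched to the children of rho(x) in some order.\<close>
definition cond_D :: "'v rtree \<Rightarrow> ('v \<Rightarrow> 's) \<Rightarrow> 'v \<Rightarrow> bool" where
  "cond_D G' \<rho> x \<longleftrightarrow> (\<forall>c \<in> children G' x. \<rho> c = \<rho> x)"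

definition cond_S :: "'v rtree \<Rightarrow> 's rtree \<Rightarrow> ('v \<Rightarrow> 's) \<Rightarrow> 'v \<Rightarrow> bool" where
  "cond_S G' S \<rho> x \<longleftrightarrow> card (children S (\<rho> x)) = 2 \<and> \<rho> ` children G' x = children S (\<rho> x)"

definition consistent :: "'v rtree \<Rightarrow> 's rtree \<Rightarrow> ('v \<Rightarrow> 's) \<Rightarrow> bool" where
  "consistent G' S \<rho> \<longleftrightarrow> \<rho> ` nodes G' \<subseteq> nodes S \<and> \<rho> (root G') = root S \<and>
     (\<forall>x \<in> nodes G'. card (children G' x) = 2 \<longrightarrow> cond_D G' \<rho> x \<or> cond_S G' S \<rho> x)"

definition dups :: "'v rtree \<Rightarrow> ('v \<Rightarrow> 's) \<Rightarrow> 'v set" where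
  "dups G' \<rho> = {x \<in> nodes G'. card (children G' x) = 2 \<and> cond_D G' \<rho> x}"

definition losses :: "'v rtree \<Rightarrow> 'v rtree \<Rightarrow> 'v set" where
  "losses G G' = leaves G' - leaves G"

definition reconciliation ::
  "'v rtree \<Rightarrow> 'v rtree \<Rightarrow> 's rtree \<Rightarrow> ('v \<Rightarrow> 's) \<Rightarrow> ('v \<Rightarrow> 's) \<Rightarrow> ('v \<Rightarrow> 'v option) \<Rightarrow> bool" where
  "reconciliation G G' S \<phi> \<rho> \<delta> \<longleftrightarrow>
     planted_binary G \<and> planted_binary S \<and> \<phi> ` leaves G \<subseteq> leaves S \<and>
     extension G' G \<and> consistent G' S \<rho> \<and> (\<forall>x \<in> leaves G. \<rho> x = \<phi> x) \<and>
     dom \<delta> \<subseteq> dups G' \<rho> \<and> ran \<delta> \<subseteq> losses G G' \<and> inj_on \<delta> (dom \<delta>) \<and>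
     (\<forall>x \<in> dom \<delta>. \<rho> x = \<rho> (the (\<delta> x)))"

definition rcost :: "'v rtree \<Rightarrow> 'v rtree \<Rightarrow> ('v \<Rightarrow> 's) \<Rightarrow> ('v \<Rightarrow> 'v option) \<Rightarrow> nat" where
  "rcost G G' \<rho> \<delta> =
     card (losses G G' - ran \<delta>) + card (dups G' \<rho> - dom \<delta>) + card (dom \<delta>)"

definition optimal_reconciliation ::
  "'v rtree \<Rightarrow> 'v rtree \<Rightarrow> 's rtree \<Rightarrow> ('v \<Rightarrow> 's) \<Rightarrow> ('v \<Rightarrow> 's) \<Rightarrow> ('v \<Rightarrow> 'v option) \<Rightarrow> bool" where
  "optimal_reconciliation G G' S \<phi> \<rho> \<delta> \<longleftrightarrow>
     reconciliation G G' S \<phi> \<rho> \<delta> \<and>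
     (\<forall>G2 \<rho>2 \<delta>2. reconciliation G G2 S \<phi> \<rho>2 \<delta>2 \<longrightarrow> rcost G G' \<rho> \<delta> \<le> rcost G G2 \<rho>2 \<delta>2)"

end

theory Submission
  imports Defs
begin
lemma rt_unfold:
  assumes "is_rooted_tree T"
  shows "finite (nodes T)" "root T \<in> nodes T" "edges T \<subseteq> nodes T \<times> nodes T"
    "\<And>w. (w, root T) \<notin> edges T"
    "\<And>y. y \<in> nodes T \<Longrightarrow> y \<noteq> root T \<Longrightarrow> \<exists>!w. (w, y) \<in> edges T"
    "\<And>y. y \<in> nodes T \<Longrightarrow> (root T, y) \<in> (edges T)\<^sup>*"
  using assms unfolding is_rooted_tree_def by blast+

lemma par_unique:
  assumes "is_rooted_tree T" "(w1, y) \<in> edges T" "(w2, y) \<in> edges T"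
  shows "w1 = w2"
proof -
  have "y \<in> nodes T" using assms rt_unfold(3)[OF assms(1)] by blast
  moreover have "y \<noteq> root T" using assms rt_unfold(4)[OF assms(1)] by blast
  ultimately show ?thesis using rt_unfold(5)[OF assms(1)] assms by blast
qed

lemma no_cycle:
  assumes T: "is_rooted_tree T" and cyc: "(y, y) \<in> (edges T)\<^sup>+"
  shows False
proof -
  have "y \<in> nodes T" using cyc rt_unfold(3)[OF T] by (meson SigmaD2 subsetD tranclE)
  hence "(root T, y) \<in> (edges T)\<^sup>*" using rt_unfold(6)[OF T] by blast
  hence "(y, y) \<notin> (edges T)\<^sup>+"
  proof (induction rule: rtrancl_induct)
    case base
    show ?case using rt_unfold(4)[OF T] by (meson tranclE)
  next
    case (step y z)
    show ?case
    proof
      assume "(z, z) \<in> (edges T)\<^sup>+"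
      then obtain w where w: "(z, w) \<in> (edges T)\<^sup>*" "(w, z) \<in> edges T"
        by (meson tranclE trancl_into_rtrancl)
      have "w = y" using par_unique[OF T w(2) step(2)] .
      hence "(y, y) \<in> (edges T)\<^sup>+" using step(2) w(1) by (meson rtrancl_into_trancl2)
      thus False using step(3) by blast
    qed
  qed
  thus False using cyc by blast
qed

lemma last_edge:
  assumes "(a, b) \<in> E\<^sup>*" "a \<noteq> b"
  obtains w where "(a, w) \<in> E\<^sup>*" "(w, b) \<in> E"
  using assms by (meson rtranclE)

lemma bypass:
  assumes path: "(a, y) \<in> E\<^sup>*" and yB: "y \<notin> B" "y \<noteq> x" and aB: "a \<notin> B" "a \<noteq> x"
    and par: "\<And>w. (w, x) \<in> E \<Longrightarrow> w = p" and pB: "p \<notin> B" "p \<noteq> x"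
    and down: "\<And>u v. (u, v) \<in> E \<Longrightarrow> u \<in> B \<Longrightarrow> v \<in> B"
    and xch: "\<And>z. (x, z) \<in> E \<Longrightarrow> z \<in> B \<or> z = d"
    and pd: "(p, d) \<in> E2"
    and keep: "\<And>u v. (u, v) \<in> E \<Longrightarrow> u \<notin> B \<Longrightarrow> v \<notin> B \<Longrightarrow> u \<noteq> x \<Longrightarrow> v \<noteq> x \<Longrightarrow> (u, v) \<in> E2"
  shows "(a, y) \<in> E2\<^sup>*"
proof -
  have "y \<notin> B \<longrightarrow> (y \<noteq> x \<longrightarrow> (a, y) \<in> E2\<^sup>*) \<and> (y = x \<longrightarrow> (a, p) \<in> E2\<^sup>*)"
    using path
  proof (induction rule: rtrancl_induct)
    case base
    then show ?case using aB by auto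
  next
    case (step y z)
    show ?case
    proof
      assume zB: "z \<notin> B"
      have yB': "y \<notin> B" using down step(2) zB by blast
      show "(z \<noteq> x \<longrightarrow> (a, z) \<in> E2\<^sup>*) \<and> (z = x \<longrightarrow> (a, p) \<in> E2\<^sup>*)"
      proof (cases "z = x")
        case True
        then have "y = p" using par step(2) by blast
        then show ?thesis using step(3) yB' pB True by auto
      next
        case False
        show ?thesis
        proof (cases "y = x")
          case True
          then have "z = d" using xch step(2) zB by blast
          then show ?thesis using step(3) yB' True pd False
            by (meson rtrancl.rtrancl_into_rtrancl)
        next
          case False2: False
          then have "(y, z) \<in> E2" using keep step(2) yB' zB False by blast
          then show ?thesis using step(3) yB' False False2
            by (meson rtrancl.rtrancl_into_rtrancl)
        qed
      qed
    qed
  qed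
  thus ?thesis using yB by blast
qed

lemma unbypass:
  assumes "(a, y) \<in> E2\<^sup>*" "y \<notin> B"
    and H: "\<And>u v. (u, v) \<in> E2 \<Longrightarrow> v \<notin> B \<Longrightarrow> (u, v) \<in> E\<^sup>* \<and> u \<notin> B"
  shows "(a, y) \<in> E\<^sup>*"
proof -
  have "y \<notin> B \<longrightarrow> (a, y) \<in> E\<^sup>*" using assms(1)
  proof (induction rule: rtrancl_induct)
    case base then show ?case by simp
  next
    case (step y z)
    then show ?case using H by (meson rtrancl_trans)
  qed
  thus ?thesis using assms(2) by blast
qed

lemma path_keep:
  assumes "(c, y) \<in> E\<^sup>*" and "\<And>u v. (c, u) \<in> E\<^sup>* \<Longrightarrow> (u, v) \<in> E \<Longrightarrow> (u, v) \<in> E2"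
  shows "(c, y) \<in> E2\<^sup>*"
  using assms(1)
proof (induction rule: rtrancl_induct)
  case base then show ?case by simp
next
  case (step y z) then show ?case using assms(2) by (meson rtrancl.rtrancl_into_rtrancl)
qed

lemma swap_card:
  assumes "finite A" "a \<in> A" "b \<notin> A"
  shows "card (A - {a} \<union> {b}) = card A"
proof -
  have "card A > 0" using assms card_gt_0_iff by blast
  thus ?thesis using assms by (simp add: card_insert_if)
qed

lemma swap_img:
  assumes "a \<in> A" "\<rho> b = \<rho> a"
  shows "\<rho> ` (A - {a} \<union> {b}) = \<rho> ` A"
  using assms by auto

lemma cost_id:
  assumes "finite L" "finite D" "ran \<delta> \<subseteq> L" "dom \<delta> \<subseteq> D" "inj_on \<delta> (dom \<delta>)"
  shows "card (L - ran \<delta>) + card (D - dom \<delta>) + card (dom \<delta>) + card (dom \<delta>) = card L + card D"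
proof -
  have ran_eq: "ran \<delta> = (\<lambda>y. the (\<delta> y)) ` dom \<delta>"
    unfolding ran_def dom_def by force
  have inj: "inj_on (\<lambda>y. the (\<delta> y)) (dom \<delta>)"
    using assms(5) unfolding inj_on_def dom_def by (metis (mono_tags, lifting) mem_Collect_eq option.collapse)
  have fd: "finite (dom \<delta>)" using assms(2,4) finite_subset by blast
  have cr: "card (ran \<delta>) = card (dom \<delta>)" using ran_eq inj card_image by metis
  have fr: "finite (ran \<delta>)" using assms(1,3) finite_subset by blast
  have "card (L - ran \<delta>) = card L - card (ran \<delta>)" using card_Diff_subset[OF fr assms(3)] .
  moreover have "card (D - dom \<delta>) = card D - card (dom \<delta>)" using card_Diff_subset[OF fd assms(4)] .
  moreover have "card (ran \<delta>) \<le> card L" using card_mono[OF assms(1,3)] .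
  moreover have "card (dom \<delta>) \<le> card D" using card_mono[OF assms(2,4)] .
  ultimately show ?thesis using cr by linarith
qed

lemma transfer:
  assumes sub: "nodes T2 \<subseteq> nodes T" and rt: "root T2 = root T"
    and H: "\<And>y. y \<in> nodes T2 \<Longrightarrow> card (children T2 y) = card (children T y) \<and>
                 \<rho> ` children T2 y = \<rho> ` children T y \<and> (children T2 y = {} \<longleftrightarrow> children T y = {})"
  shows "consistent T S \<rho> \<Longrightarrow> consistent T2 S \<rho>"
    and "dups T2 \<rho> = dups T \<rho> \<inter> nodes T2"
    and "leaves T2 = leaves T \<inter> nodes T2"
    and "planted_binary T \<Longrightarrow> is_rooted_tree T2 \<Longrightarrow> planted_binary T2"
proof -
  have cD: "cond_D T2 \<rho> y = cond_D T \<rho> y" if "y \<in> nodes T2" for y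
  proof -
    have "cond_D T2 \<rho> y \<longleftrightarrow> \<rho> ` children T2 y \<subseteq> {\<rho> y}" unfolding cond_D_def by auto
    also have "\<dots> \<longleftrightarrow> \<rho> ` children T y \<subseteq> {\<rho> y}" using H[OF that] by simp
    also have "\<dots> \<longleftrightarrow> cond_D T \<rho> y" unfolding cond_D_def by auto
    finally show ?thesis .
  qed
  have cS: "cond_S T2 S \<rho> y = cond_S T S \<rho> y" if "y \<in> nodes T2" for y
    unfolding cond_S_def using H[OF that] by simp
  show "consistent T S \<rho> \<Longrightarrow> consistent T2 S \<rho>"
  proof -
    assume c: "consistent T S \<rho>"
    have "\<rho> ` nodes T2 \<subseteq> nodes S" using c sub unfolding consistent_def by blast
    moreover have "\<rho> (root T2) = root S" using c rt unfolding consistent_def by simp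
    moreover have "cond_D T2 \<rho> y \<or> cond_S T2 S \<rho> y" if "y \<in> nodes T2" "card (children T2 y) = 2" for y
    proof -
      have "y \<in> nodes T" using sub that by blast
      moreover have "card (children T y) = 2" using H[OF that(1)] that(2) by simp
      ultimately have "cond_D T \<rho> y \<or> cond_S T S \<rho> y" using c unfolding consistent_def by blast
      thus ?thesis using cD[OF that(1)] cS[OF that(1)] by simp
    qed
    ultimately show ?thesis unfolding consistent_def by blast
  qed
  show "dups T2 \<rho> = dups T \<rho> \<inter> nodes T2"
    unfolding dups_def using sub H cD by auto
  show "leaves T2 = leaves T \<inter> nodes T2"
    unfolding leaves_def using sub H by auto
  show "planted_binary T \<Longrightarrow> is_rooted_tree T2 \<Longrightarrow> planted_binary T2"
  proof -
    assume pb: "planted_binary T" and it: "is_rooted_tree T2"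
    have "root T2 \<in> nodes T2" using it unfolding is_rooted_tree_def by blast
    hence "card (children T2 (root T2)) = 1" using H pb rt unfolding planted_binary_def by metis
    moreover have "children T2 y = {} \<or> card (children T2 y) = 2"
      if "y \<in> nodes T2" "y \<noteq> root T2" for y
    proof -
      have "children T y = {} \<or> card (children T y) = 2"
        using pb that sub rt unfolding planted_binary_def by auto
      thus ?thesis using H[OF that(1)] by simp
    qed
    ultimately show ?thesis using it unfolding planted_binary_def by blast
  qed
qed

locale recset =
  fixes G G' :: "'v rtree" and S :: "'s rtree" and \<phi> \<rho> :: "'v \<Rightarrow> 's"
    and \<delta> :: "'v \<Rightarrow> 'v option" and R :: "'v set"
  assumes rec: "reconciliation G G' S \<phi> \<rho> \<delta>"
    and R1: "root G' \<in> R" and R2: "R \<subseteq> nodes G'"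
    and R3: "\<And>x y. (x, y) \<in> edges G' \<Longrightarrow> y \<in> R \<Longrightarrow> x \<in> R"
    and R4: "nodes G = {x \<in> R. x = root G' \<or> card (children G' x \<inter> R) \<noteq> 1}"
    and R5: "root G = root G'"
    and R6: "edges G = {(x, y). x \<in> nodes G \<and> y \<in> nodes G \<and> x \<noteq> y \<and> (x, y) \<in> (edges G')\<^sup>* \<and>
                      (\<forall>z \<in> nodes G. (x, z) \<in> (edges G')\<^sup>* \<and> (z, y) \<in> (edges G')\<^sup>* \<longrightarrow>
                                      z = x \<or> z = y)}"
begin

lemma pbG': "planted_binary G'" using rec unfolding reconciliation_def extension_def by blast
lemma pbG: "planted_binary G" using rec unfolding reconciliation_def by blast
lemma rtG': "is_rooted_tree G'" using pbG' unfolding planted_binary_def by blast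
lemma consG': "consistent G' S \<rho>" using rec unfolding reconciliation_def by blast

lemmas rt = rt_unfold[OF rtG']

lemma finN: "finite (nodes G')" using rt(1) .

lemma edge_nodes: "(u, v) \<in> edges G' \<Longrightarrow> u \<in> nodes G' \<and> v \<in> nodes G'"
  using rt(3) by blast

lemma puniq: "(w1, y) \<in> edges G' \<Longrightarrow> (w2, y) \<in> edges G' \<Longrightarrow> w1 = w2"
  using par_unique[OF rtG'] by blast

lemma acyc: "(y, y) \<in> (edges G')\<^sup>+ \<Longrightarrow> False"
  using no_cycle[OF rtG'] by blast

lemma root_card: "card (children G' (root G')) = 1"
  using pbG' unfolding planted_binary_def by blast

lemma dom_dups: "dom \<delta> \<subseteq> dups G' \<rho>" using rec unfolding reconciliation_def by blast
lemma ran_losses: "ran \<delta> \<subseteq> losses G G'" using rec unfolding reconciliation_def by blast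
lemma inj\<delta>: "inj_on \<delta> (dom \<delta>)" using rec unfolding reconciliation_def by blast
lemma \<rho>\<delta>: "x \<in> dom \<delta> \<Longrightarrow> \<rho> x = \<rho> (the (\<delta> x))" using rec unfolding reconciliation_def by blast

lemma dups_N: "dups G' \<rho> \<subseteq> nodes G'" unfolding dups_def by blast
lemma losses_N: "losses G G' \<subseteq> nodes G'" unfolding losses_def leaves_def by blast
lemma fin_dups: "finite (dups G' \<rho>)" using dups_N finN finite_subset by blast
lemma fin_losses: "finite (losses G G')" using losses_N finN finite_subset by blast

lemma cost_G': "rcost G G' \<rho> \<delta> + card (dom \<delta>) = card (losses G G') + card (dups G' \<rho>)"
  unfolding rcost_def using cost_id[OF fin_losses fin_dups ran_losses dom_dups inj\<delta>] by simp

lemma nodesG_R: "nodes G \<subseteq> R" using R4 by blast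

lemma leaves_nochild: "x \<in> leaves G' \<Longrightarrow> (x, y) \<in> edges G' \<Longrightarrow> False"
  unfolding leaves_def children_def by blast

lemma losses_notR: "l \<in> losses G G' \<Longrightarrow> l \<notin> R"
proof
  assume l: "l \<in> losses G G'" and lR: "l \<in> R"
  have lf: "l \<in> leaves G'" "l \<notin> leaves G" using l unfolding losses_def by auto
  have ch: "children G' l = {}" using lf(1) unfolding leaves_def by blast
  have "l \<in> nodes G" using R4 lR ch by simp
  moreover have "children G l = {}"
  proof -
    have "(l, y) \<in> (edges G')\<^sup>* \<Longrightarrow> y = l" for y
      by (erule converse_rtranclE) (auto dest: leaves_nochild[OF lf(1)])
    thus ?thesis unfolding children_def using R6 by auto
  qed
  ultimately show False using lf(2) unfolding leaves_def by blast
qed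

lemma leaf_not_root: "x \<in> leaves G' \<Longrightarrow> x \<noteq> root G'"
  using root_card unfolding leaves_def by auto

lemma dup_card: "x \<in> dups G' \<rho> \<Longrightarrow> card (children G' x) = 2" unfolding dups_def by blast

lemma dup_not_root: "x \<in> dups G' \<rho> \<Longrightarrow> x \<noteq> root G'"
  using dup_card root_card by fastforce

lemma card_R_swap:
  assumes "y \<in> R - {x}" and xp: "\<And>w. (w, x) \<in> edges G' \<Longrightarrow> w = p" and px: "(p, x) \<in> edges G'"
    and dR: "x \<in> R \<longleftrightarrow> d \<in> R" and dp: "(p, d) \<notin> edges G'"
    and eq: "children H y \<inter> (R - {x}) = (children G' y \<inter> R - {x}) \<union> (if y = p \<and> d \<in> R then {d} else {})"
  shows "card (children H y \<inter> (R - {x})) = card (children G' y \<inter> R)"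
proof (cases "y = p")
  case False
  have "x \<notin> children G' y" using xp False unfolding children_def by blast
  then show ?thesis using eq False by (simp add: Int_Diff[symmetric])
next
  case True
  have fin: "finite (children G' y \<inter> R)" using R2 finN by (meson finite_Int finite_subset)
  show ?thesis
  proof (cases "d \<in> R")
    case True2: True
    have "x \<in> children G' y \<inter> R" using True px dR True2 unfolding children_def by blast
    moreover have "d \<notin> children G' y \<inter> R" using dp True unfolding children_def by blast
    ultimately show ?thesis using eq True True2 swap_card[OF fin] by simp
  next
    case False
    then show ?thesis using eq True dR by simp
  qed
qed

lemma ext_transfer:
  assumes pb2: "planted_binary G2" and rt2: "root G2 = root G'" and R'N: "R' \<subseteq> nodes G2"
    and rR': "root G' \<in> R'"
    and cl: "\<And>u v. (u, v) \<in> edges G2 \<Longrightarrow> v \<in> R' \<Longrightarrow> u \<in> R'"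
    and nG: "nodes G = {x \<in> R'. x = root G' \<or> card (children G2 x \<inter> R') \<noteq> 1}"
    and re: "\<And>a b. a \<in> nodes G \<Longrightarrow> b \<in> nodes G \<Longrightarrow> (a, b) \<in> (edges G2)\<^sup>* \<longleftrightarrow> (a, b) \<in> (edges G')\<^sup>*"
  shows "extension G2 G"
proof -
  have "edges G = {(x, y). x \<in> nodes G \<and> y \<in> nodes G \<and> x \<noteq> y \<and> (x, y) \<in> (edges G2)\<^sup>* \<and>
                      (\<forall>z \<in> nodes G. (x, z) \<in> (edges G2)\<^sup>* \<and> (z, y) \<in> (edges G2)\<^sup>* \<longrightarrow>
                                      z = x \<or> z = y)}"
    unfolding R6 using re by blast
  hence "\<exists>R. root G2 \<in> R \<and> R \<subseteq> nodes G2 \<and>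
          (\<forall>x y. (x, y) \<in> edges G2 \<and> y \<in> R \<longrightarrow> x \<in> R) \<and>
          nodes G = {x \<in> R. x = root G2 \<or> card (children G2 x \<inter> R) \<noteq> 1} \<and>
          root G = root G2 \<and>
          edges G = {(x, y). x \<in> nodes G \<and> y \<in> nodes G \<and> x \<noteq> y \<and> (x, y) \<in> (edges G2)\<^sup>* \<and>
                      (\<forall>z \<in> nodes G. (x, z) \<in> (edges G2)\<^sup>* \<and> (z, y) \<in> (edges G2)\<^sup>* \<longrightarrow>
                                      z = x \<or> z = y)}"
    using rt2 R'N rR' cl nG R5 by (intro exI[of _ R']) auto
  thus ?thesis unfolding extension_def using pb2 pbG by blast
qed

end

locale surg = recset G G' S \<phi> \<rho> \<delta> R
  for G G' :: "'v rtree" and S :: "'s rtree" and \<phi> \<rho> :: "'v \<Rightarrow> 's"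
    and \<delta> :: "'v \<Rightarrow> 'v option" and R :: "'v set" +
  fixes x c d p :: 'v
  assumes xD: "x \<in> dups G' \<rho>" and xG: "x \<notin> nodes G" and chx: "children G' x = {c, d}"
    and cd: "c \<noteq> d" and px: "(p, x) \<in> edges G'" and cR: "c \<notin> R" and xRd: "x \<in> R \<longleftrightarrow> d \<in> R"
begin

lemma xN: "x \<in> nodes G'" using xD dups_N by blast
lemma xr: "x \<noteq> root G'" using dup_not_root[OF xD] .
lemma xc: "(x, c) \<in> edges G'" using chx unfolding children_def by blast
lemma xd: "(x, d) \<in> edges G'" using chx unfolding children_def by blast
lemma xch: "(x, z) \<in> edges G' \<Longrightarrow> z = c \<or> z = d" using chx unfolding children_def by blast
lemma parx: "(w, x) \<in> edges G' \<Longrightarrow> w = p" using puniq px by blast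
lemma parc: "(w, c) \<in> edges G' \<Longrightarrow> w = x" using puniq xc by blast
lemma pard: "(w, d) \<in> edges G' \<Longrightarrow> w = x" using puniq xd by blast
lemma p_ne_x: "p \<noteq> x" using px acyc by blast
lemma c_ne_x: "c \<noteq> x" using xc acyc by blast
lemma d_ne_x: "d \<noteq> x" using xd acyc by blast
lemma c_nr: "c \<noteq> root G'" using xc rt(4) by blast
lemma d_nr: "d \<noteq> root G'" using xd rt(4) by blast
lemma pN: "p \<in> nodes G'" using px edge_nodes by blast
lemma cN: "c \<in> nodes G'" using xc edge_nodes by blast
lemma dN: "d \<in> nodes G'" using xd edge_nodes by blast

lemma x_nsub: "(c, x) \<notin> (edges G')\<^sup>*"
proof
  assume "(c, x) \<in> (edges G')\<^sup>*"
  hence "(x, x) \<in> (edges G')\<^sup>+" using xc by (meson rtrancl_into_trancl2)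
  thus False using acyc by blast
qed

lemma p_nsub: "(c, p) \<notin> (edges G')\<^sup>*"
  using x_nsub px by (meson rtrancl.rtrancl_into_rtrancl)

lemma d_nsub: "(c, d) \<notin> (edges G')\<^sup>*"
proof
  assume h: "(c, d) \<in> (edges G')\<^sup>*"
  then obtain w where "(c, w) \<in> (edges G')\<^sup>*" "(w, d) \<in> edges G'" using cd last_edge by metis
  thus False using pard x_nsub by blast
qed

lemma r_nsub: "(c, root G') \<notin> (edges G')\<^sup>*"
proof
  assume h: "(c, root G') \<in> (edges G')\<^sup>*"
  then obtain w where "(w, root G') \<in> edges G'" using c_nr last_edge by metis
  thus False using rt(4) by blast
qed

lemma sub_down: "(c, u) \<in> (edges G')\<^sup>* \<Longrightarrow> (u, v) \<in> edges G' \<Longrightarrow> (c, v) \<in> (edges G')\<^sup>*"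
  by (meson rtrancl.rtrancl_into_rtrancl)

lemma into_sub: "(u, v) \<in> edges G' \<Longrightarrow> (c, v) \<in> (edges G')\<^sup>* \<Longrightarrow> u = x \<or> (c, u) \<in> (edges G')\<^sup>*"
proof -
  assume e: "(u, v) \<in> edges G'" and s: "(c, v) \<in> (edges G')\<^sup>*"
  show ?thesis
  proof (cases "c = v")
    case True then show ?thesis using e parc by blast
  next
    case False
    then obtain w where "(c, w) \<in> (edges G')\<^sup>*" "(w, v) \<in> edges G'" using s last_edge by metis
    then show ?thesis using e puniq by blast
  qed
qed

lemma sub_R: "(c, y) \<in> (edges G')\<^sup>* \<Longrightarrow> y \<notin> R"
proof (induction rule: rtrancl_induct)
  case base then show ?case using cR .
next
  case (step y z) then show ?case using R3 by blast
qed

lemma \<rho>c: "\<rho> c = \<rho> x" and \<rho>d: "\<rho> d = \<rho> x"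
  using xD chx unfolding dups_def cond_D_def by auto

lemma d_np: "(p, d) \<notin> edges G'" using pard p_ne_x by blast

lemma x_nleaf: "x \<notin> leaves G'" using chx unfolding leaves_def by auto

lemma x_nloss: "x \<notin> losses G G'" using x_nleaf unfolding losses_def by blast

lemma x_child_only_p: "y \<noteq> p \<Longrightarrow> x \<notin> children G' y" using parx unfolding children_def by blast

lemma x_in_ch_p: "x \<in> children G' p" using px unfolding children_def by blast

lemma d_notin_ch_p: "d \<notin> children G' p" using d_np unfolding children_def by blast

end

context surg begin

definition W1 :: "'v set" where "W1 = {y. (c, y) \<in> (edges G')\<^sup>*} \<union> {x}"
definition N1 :: "'v set" where "N1 = nodes G' - W1"
definition E1 :: "('v \<times> 'v) set" where
  "E1 = {(u, v). (u, v) \<in> edges G' \<and> u \<notin> W1 \<and> v \<notin> W1} \<union> {(p, d)}"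
definition G1 :: "'v rtree" where "G1 = \<lparr>nodes = N1, root = root G', edges = E1\<rparr>"
definition \<delta>1 :: "'v \<Rightarrow> 'v option" where
  "\<delta>1 y = (if y \<in> W1 then None else (case \<delta> y of None \<Rightarrow> None
            | Some l \<Rightarrow> if (c, l) \<in> (edges G')\<^sup>* then None else Some l))"

lemma G1_simps[simp]: "nodes G1 = N1" "root G1 = root G'" "edges G1 = E1"
  unfolding G1_def by simp_all

lemma inW1: "y \<in> W1 \<longleftrightarrow> (c, y) \<in> (edges G')\<^sup>* \<or> y = x" unfolding W1_def by blast

lemma pW1: "p \<notin> W1" using inW1 p_nsub p_ne_x by blast
lemma dW1: "d \<notin> W1" using inW1 d_nsub d_ne_x by blast
lemma rW1: "root G' \<notin> W1" using inW1 r_nsub xr by blast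
lemma pN1: "p \<in> N1" using pW1 pN N1_def by blast
lemma dN1: "d \<in> N1" using dW1 dN N1_def by blast
lemma rN1: "root G' \<in> N1" using rW1 rt(2) N1_def by blast

lemma edge_into_W1: "y \<notin> W1 \<Longrightarrow> (y, v) \<in> edges G' \<Longrightarrow> v \<in> W1 \<Longrightarrow> y = p \<and> v = x"
  using inW1 into_sub parx by blast

lemma ch1: "y \<in> N1 \<Longrightarrow> children G1 y = (if y = p then children G' y - {x} \<union> {d} else children G' y)"
proof -
  assume y: "y \<in> N1"
  hence yW: "y \<notin> W1" unfolding N1_def by blast
  show ?thesis
    unfolding children_def G1_simps E1_def using yW edge_into_W1[OF yW] dW1 x_nsub
    by (auto simp: inW1)
qed

lemma trans1: "y \<in> N1 \<Longrightarrow> card (children G1 y) = card (children G' y) \<and>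
      \<rho> ` children G1 y = \<rho> ` children G' y \<and> (children G1 y = {} \<longleftrightarrow> children G' y = {})"
proof -
  assume y: "y \<in> N1"
  show ?thesis
  proof (cases "y = p")
    case True
    have fin: "finite (children G' p)" using finN edge_nodes unfolding children_def
      by (metis (no_types, lifting) finite_subset mem_Collect_eq subsetI)
    show ?thesis using ch1[OF y] True swap_card[OF fin x_in_ch_p d_notin_ch_p]
        swap_img[OF x_in_ch_p, of \<rho> d] \<rho>d x_in_ch_p by auto
  next
    case False then show ?thesis using ch1[OF y] by simp
  qed
qed

lemma N1_sub: "N1 \<subseteq> nodes G'" unfolding N1_def by blast

lemma tr1_H: "y \<in> nodes G1 \<Longrightarrow> card (children G1 y) = card (children G' y) \<and>
      \<rho> ` children G1 y = \<rho> ` children G' y \<and> (children G1 y = {} \<longleftrightarrow> children G' y = {})"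
  using trans1 by simp

lemma tr1_s: "nodes G1 \<subseteq> nodes G'" using N1_sub by simp

lemmas tr1 = transfer[OF tr1_s _ tr1_H, simplified]

lemma reach1:
  assumes "(a, y) \<in> (edges G')\<^sup>*" "a \<notin> W1" "y \<notin> W1"
  shows "(a, y) \<in> E1\<^sup>*"
  apply (rule bypass[OF assms(1), where B="{y. (c, y) \<in> (edges G')\<^sup>*}" and x=x and p=p and d=d])
  subgoal using assms(3) inW1 by blast
  subgoal using assms(3) inW1 by blast
  subgoal using assms(2) inW1 by blast
  subgoal using assms(2) inW1 by blast
  subgoal using parx by blast
  subgoal using p_nsub by blast
  subgoal using p_ne_x .
  subgoal using sub_down by blast
  subgoal using xch by blast
  subgoal unfolding E1_def by blast
  subgoal unfolding E1_def inW1 by blast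
  done

lemma unreach1:
  assumes "(a, y) \<in> E1\<^sup>*" shows "(a, y) \<in> (edges G')\<^sup>*"
proof (rule unbypass[OF assms, of "{}"])
  fix u v assume "(u, v) \<in> E1"
  moreover have "(p, d) \<in> (edges G')\<^sup>*" using px xd by auto
  ultimately show "(u, v) \<in> (edges G')\<^sup>* \<and> u \<notin> {}" unfolding E1_def by auto
qed simp

lemma rt1: "is_rooted_tree G1"
proof -
  have a: "finite N1" using N1_sub finN finite_subset by blast
  have b: "E1 \<subseteq> N1 \<times> N1" unfolding E1_def N1_def using edge_nodes pN pW1 dN dW1 by auto
  have c: "(w, root G') \<notin> E1" for w unfolding E1_def using rt(4) d_nr by auto
  have e: "\<exists>!w. (w, y) \<in> E1" if y: "y \<in> N1" "y \<noteq> root G'" for y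
  proof -
    have yN: "y \<in> nodes G'" "y \<notin> W1" using y unfolding N1_def by auto
    obtain w where w: "(w, y) \<in> edges G'" using rt(5)[OF yN(1) y(2)] by blast
    have ex: "\<exists>w. (w, y) \<in> E1"
    proof (cases "w = x")
      case True
      have "(c, y) \<notin> (edges G')\<^sup>*" using yN(2) unfolding inW1 by simp
      hence "y \<noteq> c" by auto
      then have "y = d" using xch w True by blast
      then show ?thesis unfolding E1_def by blast
    next
      case False
      have "(c, y) \<notin> (edges G')\<^sup>*" using yN(2) unfolding inW1 by simp
      hence "(c, w) \<notin> (edges G')\<^sup>*" using sub_down[OF _ w] by blast
      then have "w \<notin> W1" using False unfolding inW1 by simp
      then show ?thesis using w yN(2) unfolding E1_def by blast
    qed
    moreover have "w1 = w2" if "(w1, y) \<in> E1" "(w2, y) \<in> E1" for w1 w2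
    proof -
      have h: "(w, y) \<in> E1 \<Longrightarrow> ((w, y) \<in> edges G' \<and> w \<notin> W1) \<or> (w = p \<and> y = d)" for w
        unfolding E1_def by blast
      have xW: "x \<in> W1" using inW1 by blast
      show ?thesis using h[OF that(1)] h[OF that(2)] puniq pard xW by metis
    qed
    ultimately show ?thesis by blast
  qed
  have f: "(root G', y) \<in> E1\<^sup>*" if "y \<in> N1" for y
    using reach1 rt(6) rW1 that unfolding N1_def by blast
  show ?thesis unfolding is_rooted_tree_def G1_simps using a rN1 b c e f by blast
qed

lemma pb1: "planted_binary G1" using tr1(4)[OF pbG' rt1] .

lemma R_notW1: "y \<in> R \<Longrightarrow> y \<noteq> x \<Longrightarrow> y \<notin> W1"
  using sub_R unfolding inW1 by blast

lemma E1_cases: "(u, v) \<in> E1 \<Longrightarrow> ((u, v) \<in> edges G' \<and> u \<notin> W1 \<and> v \<notin> W1) \<or> (u = p \<and> v = d)"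
  unfolding E1_def by blast

lemma xW1: "x \<in> W1" unfolding inW1 by simp
lemma subW1: "(c, l) \<in> (edges G')\<^sup>* \<Longrightarrow> l \<in> W1" unfolding inW1 by simp
lemma nsubW1: "(c, l) \<notin> (edges G')\<^sup>* \<Longrightarrow> l \<noteq> x \<Longrightarrow> l \<notin> W1" unfolding inW1 by simp

lemma ext1: "extension G1 G"
proof (rule ext_transfer[of G1 "R - {x}"])
  show "planted_binary G1" using pb1 .
  show "root G1 = root G'" by simp
  show "R - {x} \<subseteq> nodes G1"
  proof
    fix y assume "y \<in> R - {x}"
    hence "y \<in> nodes G'" "y \<notin> W1" using R2 R_notW1 by auto
    thus "y \<in> nodes G1" unfolding G1_simps N1_def by blast
  qed
  show "root G' \<in> R - {x}" using R1 xr by blast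
  show "u \<in> R - {x}" if "(u, v) \<in> edges G1" "v \<in> R - {x}" for u v
  proof -
    have "((u, v) \<in> edges G' \<and> u \<notin> W1 \<and> v \<notin> W1) \<or> (u = p \<and> v = d)" using E1_cases that(1) by simp
    thus ?thesis
    proof
      assume h: "(u, v) \<in> edges G' \<and> u \<notin> W1 \<and> v \<notin> W1"
      hence "u \<in> R" using R3 that(2) by blast
      moreover have "u \<noteq> x" using h xW1 by blast
      ultimately show ?thesis by blast
    next
      assume h: "u = p \<and> v = d"
      hence "x \<in> R" using that(2) xRd by blast
      hence "p \<in> R" using R3 px by blast
      thus ?thesis using h p_ne_x by blast
    qed
  qed
  have eq: "card (children G1 y \<inter> (R - {x})) = card (children G' y \<inter> R)" if "y \<in> R - {x}" for y
  proof (rule card_R_swap[OF that parx px xRd d_np])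
    have "y \<in> N1" using that R2 R_notW1 unfolding N1_def by blast
    then show "children G1 y \<inter> (R - {x}) = children G' y \<inter> R - {x} \<union> (if y = p \<and> d \<in> R then {d} else {})"
      using ch1 d_ne_x by auto
  qed
  have "nodes G = {y \<in> R - {x}. y = root G' \<or> card (children G' y \<inter> R) \<noteq> 1}" using R4 xG by auto
  then show "nodes G = {y \<in> R - {x}. y = root G' \<or> card (children G1 y \<inter> (R - {x})) \<noteq> 1}"
    using eq by auto
  show "(a, b) \<in> (edges G1)\<^sup>* \<longleftrightarrow> (a, b) \<in> (edges G')\<^sup>*" if "a \<in> nodes G" "b \<in> nodes G" for a b
  proof -
    have "a \<notin> W1" "b \<notin> W1" using that nodesG_R xG R_notW1 by blast+
    then show ?thesis using reach1 unreach1 by auto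
  qed
qed

lemma d1_Some: "\<delta>1 y = Some l \<Longrightarrow> \<delta> y = Some l \<and> y \<notin> W1 \<and> (c, l) \<notin> (edges G')\<^sup>*"
  unfolding \<delta>1_def by (auto split: if_splits option.splits)

lemma dom1: "dom \<delta>1 = {y \<in> dom \<delta>. y \<notin> W1 \<and> (c, the (\<delta> y)) \<notin> (edges G')\<^sup>*}"
  unfolding \<delta>1_def dom_def by (auto split: if_splits option.splits)

lemma losses1: "losses G G1 = losses G G' - W1"
  using tr1(3) losses_N unfolding losses_def N1_def by auto

lemma dups1: "dups G1 \<rho> = dups G' \<rho> - W1"
  using tr1(2) dups_N unfolding N1_def by auto

lemma rec1: "reconciliation G G1 S \<phi> \<rho> \<delta>1"
proof -
  have A: "dom \<delta>1 \<subseteq> dups G1 \<rho>"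
  proof
    fix y assume "y \<in> dom \<delta>1"
    hence "y \<in> dom \<delta>" "y \<notin> W1" unfolding dom1 by auto
    hence "y \<in> dups G' \<rho>" "y \<notin> W1" using dom_dups by auto
    thus "y \<in> dups G1 \<rho>" unfolding dups1 by blast
  qed
  have B: "ran \<delta>1 \<subseteq> losses G G1"
  proof
    fix l assume "l \<in> ran \<delta>1"
    then obtain y where "\<delta>1 y = Some l" unfolding ran_def by blast
    hence h: "\<delta> y = Some l" "(c, l) \<notin> (edges G')\<^sup>*" using d1_Some by auto
    hence l1: "l \<in> losses G G'" using ran_losses unfolding ran_def by blast
    hence "l \<noteq> x" using x_nloss by blast
    hence "l \<notin> W1" using nsubW1 h(2) by blast
    thus "l \<in> losses G G1" using losses1 l1 by blast
  qed
  have C: "inj_on \<delta>1 (dom \<delta>1)"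
  proof (rule inj_onI)
    fix y1 y2 assume "y1 \<in> dom \<delta>1" "y2 \<in> dom \<delta>1" "\<delta>1 y1 = \<delta>1 y2"
    then obtain l1 l2 where "\<delta>1 y1 = Some l1" "\<delta>1 y2 = Some l2" "l1 = l2" by auto
    hence "\<delta> y1 = Some l1" "\<delta> y2 = Some l1" using d1_Some by auto
    thus "y1 = y2" using inj\<delta> unfolding inj_on_def dom_def by auto
  qed
  have D: "\<forall>y \<in> dom \<delta>1. \<rho> y = \<rho> (the (\<delta>1 y))"
  proof
    fix y assume "y \<in> dom \<delta>1"
    then obtain l where "\<delta>1 y = Some l" by auto
    hence "\<delta> y = Some l" using d1_Some by auto
    thus "\<rho> y = \<rho> (the (\<delta>1 y))" using \<rho>\<delta> \<open>\<delta>1 y = Some l\<close> by (simp add: domI)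
  qed
  have E: "planted_binary G" "planted_binary S" "\<phi> ` leaves G \<subseteq> leaves S"
     "\<forall>x \<in> leaves G. \<rho> x = \<phi> x" using rec unfolding reconciliation_def by blast+
  have F: "consistent G1 S \<rho>" using tr1(1)[OF consG'] .
  show ?thesis unfolding reconciliation_def using A B C D E F ext1 by blast
qed

lemma cost1:
  assumes strict: "\<delta> x = None \<or> (\<exists>l. \<delta> x = Some l \<and> (c, l) \<in> (edges G')\<^sup>*)"
  shows "rcost G G1 \<rho> \<delta>1 < rcost G G' \<rho> \<delta>"
proof -
  have r1: "reconciliation G G1 S \<phi> \<rho> \<delta>1" using rec1 .
  have fL1: "finite (losses G G1)" using fin_losses losses1 by simp
  have fD1: "finite (dups G1 \<rho>)" using fin_dups dups1 by simp
  have r1': "ran \<delta>1 \<subseteq> losses G G1" "dom \<delta>1 \<subseteq> dups G1 \<rho>" "inj_on \<delta>1 (dom \<delta>1)"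
    using r1 unfolding reconciliation_def by blast+
  have c1: "rcost G G1 \<rho> \<delta>1 + card (dom \<delta>1) = card (losses G G1) + card (dups G1 \<rho>)"
    unfolding rcost_def using cost_id[OF fL1 fD1 r1'] by simp
  have c0: "rcost G G' \<rho> \<delta> + card (dom \<delta>) = card (losses G G') + card (dups G' \<rho>)" using cost_G' .
  define A where "A = dom \<delta> \<inter> W1"
  define B where "B = {y \<in> dom \<delta>. (c, the (\<delta> y)) \<in> (edges G')\<^sup>*}"
  have fdom: "finite (dom \<delta>)" using dom_dups fin_dups finite_subset by blast
  have dd: "dom \<delta> - dom \<delta>1 = A \<union> B" unfolding A_def B_def dom1 by blast
  have sub1: "dom \<delta>1 \<subseteq> dom \<delta>" using dom1 by blast
  have cdom0: "card (dom \<delta> - dom \<delta>1) = card (dom \<delta>) - card (dom \<delta>1)"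
    using card_Diff_subset[OF finite_subset[OF sub1 fdom] sub1] .
  have cdom1: "card (dom \<delta>1) \<le> card (dom \<delta>)" using card_mono[OF fdom sub1] .
  have cdom: "card (dom \<delta>) = card (dom \<delta>1) + card (A \<union> B)"
    using cdom0 cdom1 unfolding dd by linarith
  have fA: "finite A" "finite B" using fdom unfolding A_def B_def by auto
  have fLW: "finite (losses G G' \<inter> W1)" using fin_losses by simp
  have fDW: "finite (dups G' \<rho> \<inter> W1)" using fin_dups by simp
  have cB: "card B \<le> card (losses G G' \<inter> W1)"
  proof (rule card_inj_on_le[of "\<lambda>y. the (\<delta> y)"])
    show "inj_on (\<lambda>y. the (\<delta> y)) B" using inj\<delta> unfolding inj_on_def B_def dom_def
      by (metis (mono_tags, lifting) mem_Collect_eq option.collapse)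
    show "(\<lambda>y. the (\<delta> y)) ` B \<subseteq> losses G G' \<inter> W1"
    proof
      fix l assume "l \<in> (\<lambda>y. the (\<delta> y)) ` B"
      then obtain y where y: "y \<in> dom \<delta>" "(c, the (\<delta> y)) \<in> (edges G')\<^sup>*" "l = the (\<delta> y)"
        unfolding B_def by blast
      have "l \<in> ran \<delta>" using y(1,3) unfolding ran_def dom_def by auto
      thus "l \<in> losses G G' \<inter> W1" using ran_losses subW1 y(2,3) by blast
    qed
  qed (rule fLW)
  have AD: "A \<subseteq> dups G' \<rho> \<inter> W1" unfolding A_def using dom_dups by blast
  have xDW: "x \<in> dups G' \<rho> \<inter> W1" using xD xW1 by blast
  have strict2: "card (A \<union> B) < card (dups G' \<rho> \<inter> W1) + card (losses G G' \<inter> W1)"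
  proof (cases "\<delta> x = None")
    case True
    hence "x \<notin> dom \<delta>" by (simp add: domIff)
    hence "x \<notin> A" unfolding A_def by simp
    hence "A \<noteq> dups G' \<rho> \<inter> W1" using xDW by metis
    hence "A \<subset> dups G' \<rho> \<inter> W1" using AD by (simp add: psubset_eq)
    hence "card A < card (dups G' \<rho> \<inter> W1)" by (rule psubset_card_mono[OF fDW])
    moreover have "card (A \<union> B) \<le> card A + card B" by (rule card_Un_le)
    ultimately show ?thesis using cB by linarith
  next
    case False
    then obtain l where "\<delta> x = Some l" "(c, l) \<in> (edges G')\<^sup>*" using strict by auto
    hence "x \<in> dom \<delta>" "(c, the (\<delta> x)) \<in> (edges G')\<^sup>*" by (simp_all add: domIff)
    hence "x \<in> A \<inter> B" unfolding A_def B_def using xW1 by simp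
    moreover have "finite (A \<inter> B)" using fA(1) by (rule finite_Int[OF disjI1])
    ultimately have "card (A \<inter> B) > 0" by (metis card_gt_0_iff empty_iff)
    moreover have "card (A \<union> B) + card (A \<inter> B) = card A + card B" using card_Un_Int[OF fA] by simp
    moreover have "card A \<le> card (dups G' \<rho> \<inter> W1)" using card_mono[OF fDW AD] .
    ultimately show ?thesis using cB by linarith
  qed
  have l1: "losses G G1 = losses G G' - (losses G G' \<inter> W1)" using losses1 by blast
  have l2: "card (losses G G' - (losses G G' \<inter> W1)) = card (losses G G') - card (losses G G' \<inter> W1)"
    using card_Diff_subset[OF fLW] by blast
  have l3: "card (losses G G' \<inter> W1) \<le> card (losses G G')" using card_mono[OF fin_losses] by blast
  have cL: "card (losses G G1) + card (losses G G' \<inter> W1) = card (losses G G')"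
    using l1 l2 l3 by simp
  have d1: "dups G1 \<rho> = dups G' \<rho> - (dups G' \<rho> \<inter> W1)" using dups1 by blast
  have d2: "card (dups G' \<rho> - (dups G' \<rho> \<inter> W1)) = card (dups G' \<rho>) - card (dups G' \<rho> \<inter> W1)"
    using card_Diff_subset[OF fDW] by blast
  have d3: "card (dups G' \<rho> \<inter> W1) \<le> card (dups G' \<rho>)" using card_mono[OF fin_dups] by blast
  have cD: "card (dups G1 \<rho>) + card (dups G' \<rho> \<inter> W1) = card (dups G' \<rho>)"
    using d1 d2 d3 by simp
  show ?thesis using c1 c0 cdom strict2 cL cD by linarith
qed

end

locale surg2 = surg G G' S \<phi> \<rho> \<delta> R x c d p
  for G G' :: "'v rtree" and S :: "'s rtree" and \<phi> \<rho> :: "'v \<Rightarrow> 's"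
    and \<delta> :: "'v \<Rightarrow> 'v option" and R :: "'v set" and x c d p :: 'v +
  fixes l q :: 'v
  assumes dx: "\<delta> x = Some l" and lsub: "(c, l) \<notin> (edges G')\<^sup>*" and ld: "l \<noteq> d"
    and ql: "(q, l) \<in> edges G'"
begin

lemma lloss: "l \<in> losses G G'" using dx ran_losses unfolding ran_def by blast
lemma lleaf: "l \<in> leaves G'" using lloss unfolding losses_def by blast
lemma lnoch: "(l, v) \<notin> edges G'" using leaves_nochild[OF lleaf] by blast
lemma lR: "l \<notin> R" using losses_notR[OF lloss] .
lemma lN: "l \<in> nodes G'" using lleaf unfolding leaves_def by blast
lemma l_ne_x: "l \<noteq> x" using lloss x_nloss by blast
lemma l_ne_c: "l \<noteq> c" using lsub by blast
lemma q_ne_x: "q \<noteq> x" using ql xch ld l_ne_c by blast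
lemma q_nsub: "(c, q) \<notin> (edges G')\<^sup>*" using lsub ql sub_down by blast
lemma q_ne_l: "q \<noteq> l" using ql lnoch by blast
lemma p_ne_l: "p \<noteq> l" using px lnoch by blast
lemma \<rho>l: "\<rho> l = \<rho> x" using \<rho>\<delta>[of x] dx by (simp add: domIff)
lemma parl: "(w, l) \<in> edges G' \<Longrightarrow> w = q" using puniq ql by blast
lemma qN: "q \<in> nodes G'" using ql edge_nodes by blast
lemma l_nr: "l \<noteq> root G'" using leaf_not_root[OF lleaf] .
lemma c_nch_q: "(q, c) \<notin> edges G'" using parc q_ne_x by blast
lemma l_ch_q: "l \<in> children G' q" using ql unfolding children_def by blast
lemma c_nchq: "c \<notin> children G' q" using c_nch_q unfolding children_def by blast
lemma l_ndup: "l \<notin> dups G' \<rho>" using lleaf unfolding leaves_def dups_def by auto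

definition N2 :: "'v set" where "N2 = nodes G' - {x, l}"
definition E2 :: "('v \<times> 'v) set" where
  "E2 = {(u, v). (u, v) \<in> edges G' \<and> u \<noteq> x \<and> v \<noteq> x \<and> v \<noteq> l} \<union> {(p, d), (q, c)}"
definition G2 :: "'v rtree" where "G2 = \<lparr>nodes = N2, root = root G', edges = E2\<rparr>"
definition \<delta>2 :: "'v \<Rightarrow> 'v option" where "\<delta>2 = \<delta>(x := None)"

lemma G2_simps[simp]: "nodes G2 = N2" "root G2 = root G'" "edges G2 = E2"
  unfolding G2_def by simp_all

lemma E2_cases: "(u, v) \<in> E2 \<Longrightarrow> ((u, v) \<in> edges G' \<and> u \<noteq> x \<and> v \<noteq> x \<and> v \<noteq> l) \<or>
    (u = p \<and> v = d) \<or> (u = q \<and> v = c)"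
  unfolding E2_def by blast

lemma ch2: "y \<in> N2 \<Longrightarrow> children G2 y = (children G' y - {x, l}) \<union> (if y = p then {d} else {})
     \<union> (if y = q then {c} else {})"
  unfolding children_def G2_simps E2_def N2_def by auto

lemma ch_xl: "y \<noteq> p \<Longrightarrow> y \<noteq> q \<Longrightarrow> children G' y \<inter> {x, l} = {}"
  using parx parl unfolding children_def by blast

lemma finch: "finite (children G' y)" using finN edge_nodes unfolding children_def
  by (metis (no_types, lifting) finite_subset mem_Collect_eq subsetI)

lemma trans2: "y \<in> N2 \<Longrightarrow> card (children G2 y) = card (children G' y) \<and>
      \<rho> ` children G2 y = \<rho> ` children G' y \<and> (children G2 y = {} \<longleftrightarrow> children G' y = {})"
proof -
  assume y: "y \<in> N2"
  have sw1: "card (children G' p - {x} \<union> {d}) = card (children G' p) \<and>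
             \<rho> ` (children G' p - {x} \<union> {d}) = \<rho> ` children G' p"
    using swap_card[OF finch x_in_ch_p d_notin_ch_p] swap_img[OF x_in_ch_p, of \<rho> d] \<rho>d by simp
  have sw2: "card (children G' q - {l} \<union> {c}) = card (children G' q) \<and>
             \<rho> ` (children G' q - {l} \<union> {c}) = \<rho> ` children G' q"
    using swap_card[OF finch l_ch_q c_nchq] swap_img[OF l_ch_q, of \<rho> c] \<rho>c \<rho>l by simp
  show ?thesis
  proof (cases "y = p")
    case True
    show ?thesis
    proof (cases "y = q")
      case True2: True
      define A1 where "A1 = children G' p - {x} \<union> {d}"
      have f1: "finite A1" unfolding A1_def using finch by simp
      have l1: "l \<in> A1" unfolding A1_def using l_ch_q True True2 l_ne_x by simp
      have c1: "c \<notin> A1" unfolding A1_def using c_nchq True True2 cd by simp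
      have eq: "children G2 y = A1 - {l} \<union> {c}"
        unfolding A1_def using ch2[OF y] True True2 ld l_ne_c by auto
      have ne: "x \<in> children G' y" using x_in_ch_p True by simp
      show ?thesis using eq swap_card[OF f1 l1 c1] swap_img[OF l1, of \<rho> c] \<rho>c \<rho>l sw1
        ne unfolding A1_def using True by auto
    next
      case False
      have "l \<notin> children G' p" using parl False True unfolding children_def by blast
      hence "children G2 y = children G' p - {x} \<union> {d}" using ch2[OF y] True False by auto
      then show ?thesis using sw1 True x_in_ch_p by auto
    qed
  next
    case False
    show ?thesis
    proof (cases "y = q")
      case True
      have "x \<notin> children G' q" using x_child_only_p False True by blast
      hence "children G2 y = children G' q - {l} \<union> {c}" using ch2[OF y] True False by auto
      then show ?thesis using sw2 True l_ch_q by auto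
    next
      case False2: False
      have "children G2 y = children G' y" using ch2[OF y] ch_xl[OF False False2] False False2 by auto
      then show ?thesis by simp
    qed
  qed
qed

lemma tr2_H: "y \<in> nodes G2 \<Longrightarrow> card (children G2 y) = card (children G' y) \<and>
      \<rho> ` children G2 y = \<rho> ` children G' y \<and> (children G2 y = {} \<longleftrightarrow> children G' y = {})"
  using trans2 by simp

lemma tr2_s: "nodes G2 \<subseteq> nodes G'" unfolding G2_simps N2_def by blast

lemmas tr2 = transfer[OF tr2_s _ tr2_H, simplified]

end

context surg2 begin

lemma reach2:
  assumes "(a, y) \<in> (edges G')\<^sup>*" "(c, a) \<notin> (edges G')\<^sup>*" "a \<noteq> l" "a \<noteq> x"
    "(c, y) \<notin> (edges G')\<^sup>*" "y \<noteq> l" "y \<noteq> x"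
  shows "(a, y) \<in> E2\<^sup>*"
  apply (rule bypass[OF assms(1), where B="{y. (c, y) \<in> (edges G')\<^sup>* \<or> y = l}" and x=x and p=p and d=d])
  subgoal using assms(5,6) by simp
  subgoal using assms(7) .
  subgoal using assms(2,3) by simp
  subgoal using assms(4) .
  subgoal using parx by blast
  subgoal using p_nsub p_ne_l by simp
  subgoal using p_ne_x .
  subgoal for u v using sub_down lnoch by blast
  subgoal for z using xch by blast
  subgoal unfolding E2_def by blast
  subgoal for u v unfolding E2_def by simp
  done

lemma unreach2:
  assumes "(a, y) \<in> E2\<^sup>*" "(c, y) \<notin> (edges G')\<^sup>*"
  shows "(a, y) \<in> (edges G')\<^sup>*"
proof (rule unbypass[OF assms(1), where B="{y. (c, y) \<in> (edges G')\<^sup>*}"])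
  show "y \<notin> {y. (c, y) \<in> (edges G')\<^sup>*}" using assms(2) by simp
  fix u v assume e: "(u, v) \<in> E2" and v: "v \<notin> {y. (c, y) \<in> (edges G')\<^sup>*}"
  have "((u, v) \<in> edges G' \<and> u \<noteq> x \<and> v \<noteq> x \<and> v \<noteq> l) \<or> (u = p \<and> v = d) \<or> (u = q \<and> v = c)"
    using E2_cases[OF e] .
  thus "(u, v) \<in> (edges G')\<^sup>* \<and> u \<notin> {y. (c, y) \<in> (edges G')\<^sup>*}"
  proof (elim disjE)
    assume h: "(u, v) \<in> edges G' \<and> u \<noteq> x \<and> v \<noteq> x \<and> v \<noteq> l"
    have "(c, u) \<notin> (edges G')\<^sup>*" using v h sub_down by blast
    thus ?thesis using h by auto
  next
    assume h: "u = p \<and> v = d"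
    have "(p, d) \<in> (edges G')\<^sup>*" using px xd by auto
    thus ?thesis using h p_nsub by simp
  next
    assume h: "u = q \<and> v = c"
    thus ?thesis using v by simp
  qed
qed

lemma rW2: "root G' \<in> N2" using rt(2) xr l_nr unfolding N2_def by blast

lemma rt2: "is_rooted_tree G2"
proof -
  have a: "finite N2" using finN unfolding N2_def by simp
  have b: "E2 \<subseteq> N2 \<times> N2"
  proof
    fix e assume "e \<in> E2"
    then obtain u v where e: "e = (u, v)" "(u, v) \<in> E2" by (cases e) auto
    have "((u, v) \<in> edges G' \<and> u \<noteq> x \<and> v \<noteq> x \<and> v \<noteq> l) \<or> (u = p \<and> v = d) \<or> (u = q \<and> v = c)"
      using E2_cases[OF e(2)] .
    thus "e \<in> N2 \<times> N2"
    proof (elim disjE)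
      assume h: "(u, v) \<in> edges G' \<and> u \<noteq> x \<and> v \<noteq> x \<and> v \<noteq> l"
      have "u \<noteq> l" using h lnoch by blast
      thus ?thesis using h e(1) edge_nodes unfolding N2_def by blast
    next
      assume h: "u = p \<and> v = d"
      thus ?thesis using e(1) pN dN p_ne_x p_ne_l d_ne_x ld unfolding N2_def by auto
    next
      assume h: "u = q \<and> v = c"
      thus ?thesis using e(1) qN cN q_ne_x q_ne_l c_ne_x l_ne_c unfolding N2_def by auto
    qed
  qed
  have c: "(w, root G') \<notin> E2" for w unfolding E2_def using rt(4) d_nr c_nr by auto
  have e: "\<exists>!w. (w, y) \<in> E2" if y: "y \<in> N2" "y \<noteq> root G'" for y
  proof -
    have yN: "y \<in> nodes G'" "y \<noteq> x" "y \<noteq> l" using y unfolding N2_def by auto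
    obtain w where w: "(w, y) \<in> edges G'" using rt(5)[OF yN(1) y(2)] by blast
    have ex: "\<exists>w. (w, y) \<in> E2"
    proof (cases "w = x")
      case True
      then have "y = c \<or> y = d" using xch w by blast
      then show ?thesis unfolding E2_def by blast
    next
      case False
      then show ?thesis using w yN unfolding E2_def by blast
    qed
    moreover have "w1 = w2" if "(w1, y) \<in> E2" "(w2, y) \<in> E2" for w1 w2
      using E2_cases[OF that(1)] E2_cases[OF that(2)] puniq pard parc cd by metis
    ultimately show ?thesis by blast
  qed
  have f: "(root G', y) \<in> E2\<^sup>*" if "y \<in> N2" for y
  proof -
    have yN: "y \<in> nodes G'" "y \<noteq> x" "y \<noteq> l" using that unfolding N2_def by auto
    have r: "(c, root G') \<notin> (edges G')\<^sup>*" "root G' \<noteq> l" "root G' \<noteq> x" using r_nsub l_nr xr by auto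
    show ?thesis
    proof (cases "(c, y) \<in> (edges G')\<^sup>*")
      case False
      then show ?thesis using reach2[OF rt(6)[OF yN(1)] r] yN by blast
    next
      case True
      have "(root G', q) \<in> E2\<^sup>*" using reach2[OF rt(6)[OF qN] r q_nsub q_ne_l q_ne_x] .
      moreover have "(q, c) \<in> E2" unfolding E2_def by blast
      moreover have "(c, y) \<in> E2\<^sup>*"
      proof (rule path_keep[OF True])
        fix u v assume h: "(c, u) \<in> (edges G')\<^sup>*" "(u, v) \<in> edges G'"
        have "(c, v) \<in> (edges G')\<^sup>*" using sub_down h by blast
        hence "v \<noteq> x" "v \<noteq> l" using x_nsub lsub by auto
        moreover have "u \<noteq> x" using h(1) x_nsub by auto
        ultimately show "(u, v) \<in> E2" using h(2) unfolding E2_def by blast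
      qed
      ultimately show ?thesis by (meson converse_rtrancl_into_rtrancl rtrancl_trans)
    qed
  qed
  show ?thesis unfolding is_rooted_tree_def G2_simps using a rW2 b c e f by blast
qed

lemma pb2: "planted_binary G2" using tr2(4)[OF pbG' rt2] .

end

context surg2 begin

lemma ext2: "extension G2 G"
proof (rule ext_transfer[of G2 "R - {x}"])
  show "planted_binary G2" using pb2 .
  show "root G2 = root G'" by simp
  show "R - {x} \<subseteq> nodes G2" using R2 lR unfolding G2_simps N2_def by blast
  show "root G' \<in> R - {x}" using R1 xr by blast
  show "u \<in> R - {x}" if "(u, v) \<in> edges G2" "v \<in> R - {x}" for u v
  proof -
    have "((u, v) \<in> edges G' \<and> u \<noteq> x \<and> v \<noteq> x \<and> v \<noteq> l) \<or> (u = p \<and> v = d) \<or> (u = q \<and> v = c)"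
      using E2_cases that(1) by simp
    thus ?thesis
    proof (elim disjE)
      assume h: "(u, v) \<in> edges G' \<and> u \<noteq> x \<and> v \<noteq> x \<and> v \<noteq> l"
      thus ?thesis using R3 that(2) by blast
    next
      assume h: "u = p \<and> v = d"
      hence "x \<in> R" using that(2) xRd by blast
      hence "p \<in> R" using R3 px by blast
      thus ?thesis using h p_ne_x by blast
    next
      assume h: "u = q \<and> v = c"
      thus ?thesis using that(2) cR by blast
    qed
  qed
  have eq: "card (children G2 y \<inter> (R - {x})) = card (children G' y \<inter> R)" if "y \<in> R - {x}" for y
  proof (rule card_R_swap[OF that parx px xRd d_np])
    have "y \<in> N2" using that R2 lR unfolding N2_def by blast
    then show "children G2 y \<inter> (R - {x}) = children G' y \<inter> R - {x} \<union> (if y = p \<and> d \<in> R then {d} else {})"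
      using ch2 d_ne_x lR cR by auto
  qed
  have "nodes G = {y \<in> R - {x}. y = root G' \<or> card (children G' y \<inter> R) \<noteq> 1}" using R4 xG by auto
  then show "nodes G = {y \<in> R - {x}. y = root G' \<or> card (children G2 y \<inter> (R - {x})) \<noteq> 1}"
    using eq by auto
  show "(a, b) \<in> (edges G2)\<^sup>* \<longleftrightarrow> (a, b) \<in> (edges G')\<^sup>*" if "a \<in> nodes G" "b \<in> nodes G" for a b
  proof -
    have "a \<in> R" "b \<in> R" "a \<noteq> x" "b \<noteq> x" using that nodesG_R xG by auto
    hence "(c, a) \<notin> (edges G')\<^sup>*" "(c, b) \<notin> (edges G')\<^sup>*" "a \<noteq> l" "b \<noteq> l"
      using sub_R lR by auto
    then show ?thesis using reach2 unreach2 \<open>a \<noteq> x\<close> \<open>b \<noteq> x\<close> by auto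
  qed
qed

lemma dom2: "dom \<delta>2 = dom \<delta> - {x}" unfolding \<delta>2_def by auto

lemma losses2: "losses G G2 = losses G G' - {l}"
  using tr2(3) losses_N x_nloss unfolding losses_def N2_def by auto

lemma dups2: "dups G2 \<rho> = dups G' \<rho> - {x}"
  using tr2(2) dups_N l_ndup unfolding N2_def by auto

lemma rec2: "reconciliation G G2 S \<phi> \<rho> \<delta>2"
proof -
  have A: "dom \<delta>2 \<subseteq> dups G2 \<rho>" using dom_dups unfolding dom2 dups2 by blast
  have B: "ran \<delta>2 \<subseteq> losses G G2"
  proof
    fix l' assume "l' \<in> ran \<delta>2"
    then obtain y where y: "\<delta>2 y = Some l'" unfolding ran_def by blast
    hence yx: "y \<noteq> x" "\<delta> y = Some l'" unfolding \<delta>2_def by (auto split: if_splits)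
    hence "l' \<in> losses G G'" using ran_losses unfolding ran_def by blast
    moreover have "l' \<noteq> l"
    proof
      assume "l' = l"
      hence "\<delta> y = \<delta> x" using yx dx by simp
      hence "y = x" using inj\<delta> yx(2) dx unfolding inj_on_def by blast
      thus False using yx by blast
    qed
    ultimately show "l' \<in> losses G G2" unfolding losses2 by blast
  qed
  have C: "inj_on \<delta>2 (dom \<delta>2)"
  proof (rule inj_onI)
    fix y1 y2 assume h: "y1 \<in> dom \<delta>2" "y2 \<in> dom \<delta>2" "\<delta>2 y1 = \<delta>2 y2"
    hence "y1 \<in> dom \<delta>" "y2 \<in> dom \<delta>" "y1 \<noteq> x" "y2 \<noteq> x" unfolding dom2 by auto
    moreover have "\<delta> y1 = \<delta> y2" using h calculation unfolding \<delta>2_def by simp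
    ultimately show "y1 = y2" using inj\<delta> unfolding inj_on_def by blast
  qed
  have D: "\<forall>y \<in> dom \<delta>2. \<rho> y = \<rho> (the (\<delta>2 y))"
  proof
    fix y assume "y \<in> dom \<delta>2"
    hence "y \<in> dom \<delta>" "y \<noteq> x" unfolding dom2 by auto
    thus "\<rho> y = \<rho> (the (\<delta>2 y))" using \<rho>\<delta> unfolding \<delta>2_def by simp
  qed
  have E: "planted_binary G" "planted_binary S" "\<phi> ` leaves G \<subseteq> leaves S"
     "\<forall>x \<in> leaves G. \<rho> x = \<phi> x" using rec unfolding reconciliation_def by blast+
  have F: "consistent G2 S \<rho>" using tr2(1)[OF consG'] .
  show ?thesis unfolding reconciliation_def using A B C D E F ext2 by blast
qed

lemma cost2: "rcost G G2 \<rho> \<delta>2 < rcost G G' \<rho> \<delta>"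
proof -
  have r1': "ran \<delta>2 \<subseteq> losses G G2" "dom \<delta>2 \<subseteq> dups G2 \<rho>" "inj_on \<delta>2 (dom \<delta>2)"
    using rec2 unfolding reconciliation_def by blast+
  have fL2: "finite (losses G G2)" using fin_losses losses2 by simp
  have fD2: "finite (dups G2 \<rho>)" using fin_dups dups2 by simp
  have c2: "rcost G G2 \<rho> \<delta>2 + card (dom \<delta>2) = card (losses G G2) + card (dups G2 \<rho>)"
    unfolding rcost_def using cost_id[OF fL2 fD2 r1'] by simp
  have c0: "rcost G G' \<rho> \<delta> + card (dom \<delta>) = card (losses G G') + card (dups G' \<rho>)" using cost_G' .
  have fdom: "finite (dom \<delta>)" using dom_dups fin_dups finite_subset by blast
  have xdom: "x \<in> dom \<delta>" using dx by (simp add: domIff)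
  have e1: "card (dom \<delta>2) = card (dom \<delta>) - 1" unfolding dom2 using card_Diff_singleton[OF xdom] .
  have e2: "card (losses G G2) = card (losses G G') - 1" unfolding losses2 using card_Diff_singleton[OF lloss] .
  have e3: "card (dups G2 \<rho>) = card (dups G' \<rho>) - 1" unfolding dups2 using card_Diff_singleton[OF xD] .
  have g1: "card (dom \<delta>) \<ge> 1" using fdom xdom by (metis One_nat_def Suc_leI card_gt_0_iff empty_iff)
  have g2: "card (losses G G') \<ge> 1" using fin_losses lloss by (metis One_nat_def Suc_leI card_gt_0_iff empty_iff)
  have g3: "card (dups G' \<rho>) \<ge> 1" using fin_dups xD by (metis One_nat_def Suc_leI card_gt_0_iff empty_iff)
  show ?thesis using c2 c0 e1 e2 e3 g1 g2 g3 by linarith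
qed

end

theorem lemma12:
  fixes G G' :: "'v rtree" and S :: "'s rtree"
    and \<phi> \<rho> :: "'v \<Rightarrow> 's" and \<delta> :: "'v \<Rightarrow> 'v option"
  assumes "optimal_reconciliation G G' S \<phi> \<rho> \<delta>"
  shows "dups G' \<rho> \<subseteq> nodes G"
proof (rule ccontr)
  assume "\<not> dups G' \<rho> \<subseteq> nodes G"
  then obtain x where xD: "x \<in> dups G' \<rho>" and xG: "x \<notin> nodes G" by blast
  have rec: "reconciliation G G' S \<phi> \<rho> \<delta>" using assms unfolding optimal_reconciliation_def by blast
  have opt: "\<And>G2 \<rho>2 \<delta>2. reconciliation G G2 S \<phi> \<rho>2 \<delta>2 \<Longrightarrow> rcost G G' \<rho> \<delta> \<le> rcost G G2 \<rho>2 \<delta>2"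
    using assms unfolding optimal_reconciliation_def by blast
  have ext: "extension G' G" using rec unfolding reconciliation_def by blast
  obtain R where RR: "root G' \<in> R \<and> R \<subseteq> nodes G' \<and>
      (\<forall>x y. (x, y) \<in> edges G' \<and> y \<in> R \<longrightarrow> x \<in> R) \<and>
      nodes G = {x \<in> R. x = root G' \<or> card (children G' x \<inter> R) \<noteq> 1} \<and>
      root G = root G' \<and>
      edges G = {(x, y). x \<in> nodes G \<and> y \<in> nodes G \<and> x \<noteq> y \<and> (x, y) \<in> (edges G')\<^sup>* \<and>
                      (\<forall>z \<in> nodes G. (x, z) \<in> (edges G')\<^sup>* \<and> (z, y) \<in> (edges G')\<^sup>* \<longrightarrow>
                                      z = x \<or> z = y)}"
    using conjunct2[OF conjunct2[OF ext[unfolded extension_def]]] by (rule exE)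
  note R = conjunct1[OF RR] conjunct1[OF conjunct2[OF RR]]
    conjunct1[OF conjunct2[OF conjunct2[OF RR]]]
    conjunct1[OF conjunct2[OF conjunct2[OF conjunct2[OF RR]]]]
    conjunct1[OF conjunct2[OF conjunct2[OF conjunct2[OF conjunct2[OF RR]]]]]
    conjunct2[OF conjunct2[OF conjunct2[OF conjunct2[OF conjunct2[OF RR]]]]]
  have R3': "\<And>x y. (x, y) \<in> edges G' \<Longrightarrow> y \<in> R \<Longrightarrow> x \<in> R" using R(3) by blast
  interpret r: recset G G' S \<phi> \<rho> \<delta> R
    by (rule recset.intro[OF rec R(1,2) R3' R(4,5,6)])
  have xN: "x \<in> nodes G'" using xD r.dups_N by blast
  have xr: "x \<noteq> root G'" using r.dup_not_root[OF xD] .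
  obtain p where px: "(p, x) \<in> edges G'" using r.rt(5)[OF xN xr] by blast
  obtain c0 d0 where ch0: "children G' x = {c0, d0}" "c0 \<noteq> d0"
    using r.dup_card[OF xD] card_2_iff by metis
  obtain c d where ch: "children G' x = {c, d}" "c \<noteq> d" "c \<notin> R" "x \<in> R \<longleftrightarrow> d \<in> R"
  proof (cases "x \<in> R")
    case True
    hence "card ({c0, d0} \<inter> R) = 1" using R(4) xG xr ch0 by auto
    show ?thesis
    proof (cases "c0 \<in> R")
      case True2: True
      hence "d0 \<notin> R" using \<open>card ({c0, d0} \<inter> R) = 1\<close> ch0(2) by auto
      thus ?thesis using that[of d0 c0] ch0 True True2 by auto
    next
      case False
      hence "d0 \<in> R" using \<open>card ({c0, d0} \<inter> R) = 1\<close> by (cases "d0 \<in> R") auto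
      thus ?thesis using that[of c0 d0] ch0 True False by auto
    qed
  next
    case False
    have "(x, c0) \<in> edges G'" "(x, d0) \<in> edges G'" using ch0 unfolding children_def by auto
    hence "c0 \<notin> R" "d0 \<notin> R" using R(3) False by blast+
    thus ?thesis using that[of c0 d0] ch0 False by auto
  qed
  interpret s: surg G G' S \<phi> \<rho> \<delta> R x c d p
    by (rule surg.intro[OF r.recset_axioms surg_axioms.intro[OF xD xG ch(1,2) px ch(3,4)]])
  have better: "\<exists>G2 \<delta>2. reconciliation G G2 S \<phi> \<rho> \<delta>2 \<and> rcost G G2 \<rho> \<delta>2 < rcost G G' \<rho> \<delta>"
  proof (cases "\<delta> x")
    case None
    thus ?thesis using s.rec1 s.cost1 by blast
  next
    case (Some l)
    show ?thesis
    proof (cases "(c, l) \<in> (edges G')\<^sup>*")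
      case True
      thus ?thesis using s.rec1 s.cost1 Some by blast
    next
      case False
      show ?thesis
      proof (cases "d \<notin> R \<and> (d, l) \<in> (edges G')\<^sup>*")
        case True
        have ch': "children G' x = {d, c}" "d \<noteq> c" "d \<notin> R" "x \<in> R \<longleftrightarrow> c \<in> R"
          using ch True by auto
        interpret s': surg G G' S \<phi> \<rho> \<delta> R x d c p
          by (rule surg.intro[OF r.recset_axioms surg_axioms.intro[OF xD xG ch'(1,2) px ch'(3,4)]])
        show ?thesis using s'.rec1 s'.cost1 Some True by blast
      next
        case False2: False
        have lloss: "l \<in> losses G G'" using Some r.ran_losses unfolding ran_def by blast
        have ld: "l \<noteq> d"
        proof
          assume "l = d"
          hence "d \<notin> R" using r.losses_notR lloss by blast
          thus False using False2 \<open>l = d\<close> by blast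
        qed
        have lN: "l \<in> nodes G'" using lloss r.losses_N by blast
        have lr: "l \<noteq> root G'" using lloss r.leaf_not_root unfolding losses_def by blast
        obtain q where ql: "(q, l) \<in> edges G'" using r.rt(5)[OF lN lr] by blast
        interpret s2: surg2 G G' S \<phi> \<rho> \<delta> R x c d p l q
          by (rule surg2.intro[OF s.surg_axioms surg2_axioms.intro[where G'=G' and \<delta>=\<delta> and x=x and c=c and d=d and l=l and q=q, OF Some False ld ql]])
        show ?thesis using s2.rec2 s2.cost2 by blast
      qed
    qed
  qed
  then obtain G2 \<delta>2 where "reconciliation G G2 S \<phi> \<rho> \<delta>2" "rcost G G2 \<rho> \<delta>2 < rcost G G' \<rho> \<delta>" by blast
  thus False using opt[of G2 \<rho> \<delta>2] by linarith
qed

end
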